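(* For any random vector $\mathbf{X}$ in $\mathbb{R}^n$, $$\mathsf{Var}(\vec{\mathbf{X}})\ge\mathsf{Var}(\|\mathbf{X}\|).$$ In particular, for $\mathbf{X}\sim\mathcal{N}(\mathbf{0}_n,\mathbf{I}_n)$: for every $n\ge 1$, $$\mathsf{Var}(\|\mathbf{X}\|)=n-2\left(\frac{\Gamma\left(\frac{n+1}{2}\right)}{\Gamma\left(\frac{n}{2}\right)}\right)^2,$$ and $n\mapsto\mathsf{Var}(\|\mathbf{X}\|)$ is monotonically increasing with $\lim_{n\to\infty}\mathsf{Var}(\|\mathbf{X}\|)=\frac12$.
   Context: $\vec{\mathbf{X}}$ is $\mathbf{X}$ with entries sorted in ascending order; for a random vector $\mathbf{V}$, $\mathsf{Var}(\mathbf{V})=\mathbb{E}\left[\|\mathbf{V}-\mathbb{E}[\mathbf{V}]\|^2\right]$, and for a scalar it is the usual variance; $\|\cdot\|$ is the Euclidean norm and $\Gamma$ is the gamma function. *)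

theory Defs
  imports "HOL-Probability.Probability"
begin

text \<open>Vectors of \<open>\<real>\<^sup>n\<close> are represented as functions \<open>nat \<Rightarrow> real\<close>; only the
  coordinates \<open>0..<n\<close> matter.\<close>

definition rvar :: "'a measure \<Rightarrow> ('a \<Rightarrow> real) \<Rightarrow> real" where
  "rvar M Y = (\<integral>\<omega>. (Y \<omega> - (\<integral>\<omega>'. Y \<omega>' \<partial>M))\<^sup>2 \<partial>M)"

definition vnorm :: "nat \<Rightarrow> (nat \<Rightarrow> real) \<Rightarrow> real" where
  "vnorm n x = sqrt (\<Sum>i<n. (x i)\<^sup>2)"

definition vvar :: "'a measure \<Rightarrow> nat \<Rightarrow> ('a \<Rightarrow> nat \<Rightarrow> real) \<Rightarrow> real" where
  "vvar M n V = (\<integral>\<omega>. (vnorm n (\<lambda>i. V \<omega> i - (\<integral>\<omega>'. V \<omega>' i \<partial>M)))\<^sup>2 \<partial>M)"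

definition sort_vec :: "nat \<Rightarrow> (nat \<Rightarrow> real) \<Rightarrow> (nat \<Rightarrow> real)" where
  "sort_vec n x = (\<lambda>i. if i < n then sort (map x [0..<n]) ! i else 0)"

definition std_gauss :: "nat \<Rightarrow> (nat \<Rightarrow> real) measure" where
  "std_gauss n = PiM {..<n} (\<lambda>_. density lborel std_normal_density)"

definition gauss_norm_var :: "nat \<Rightarrow> real" where
  "gauss_norm_var n = rvar (std_gauss n) (vnorm n)"

end

theory Submission
  imports Defs
begin


lemma Gamma_half_bounds:
  fixes x :: real assumes x: "x > 0"
  shows "(Gamma (x + 1/2))^2 \<le> x * (Gamma x)^2"
    and "x^2 * (Gamma x)^2 \<le> (x + 1/2) * (Gamma (x + 1/2))^2"
proof -
  have pos: "Gamma x > 0" "Gamma (x+1) > 0" "Gamma (x+1/2) > 0" "Gamma (x+3/2) > 0"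
    using x by (auto intro!: Gamma_real_pos)
  hence pos': "Gamma x \<noteq> 0" "Gamma (x+1) \<noteq> 0" "Gamma (x+1/2) \<noteq> 0" "Gamma (x+3/2) \<noteq> 0" by auto
  have cv: "convex_on {0<..} (ln \<circ> Gamma :: real \<Rightarrow> real)" by (rule log_convex_Gamma_real)
  have "ln (Gamma ((1/2) *\<^sub>R x + (1 - 1/2) *\<^sub>R (x+1))) \<le> (1/2) * ln (Gamma x) + (1 - 1/2) * ln (Gamma (x+1))"
    using convex_onD[OF cv, of "1/2" x "x+1"] x by simp
  moreover have "(1/2) *\<^sub>R x + (1 - 1/2) *\<^sub>R (x+1) = x + 1/2" by (simp add: field_simps)
  ultimately have "2 * ln (Gamma (x + 1/2)) \<le> ln (Gamma x) + ln (Gamma (x+1))" by simp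
  hence "ln ((Gamma (x + 1/2))^2) \<le> ln (Gamma x * Gamma (x+1))"
    using x pos pos' by (simp add: ln_mult ln_realpow)
  hence "(Gamma (x + 1/2))^2 \<le> Gamma x * Gamma (x+1)"
    using x pos pos' by (subst (asm) ln_le_cancel_iff) auto
  also have "Gamma (x+1) = x * Gamma x" using x by (subst Gamma_plus1) (auto simp: nonpos_Ints_def)
  finally show "(Gamma (x + 1/2))^2 \<le> x * (Gamma x)^2" by (simp add: power2_eq_square mult_ac)
  have "ln (Gamma ((1/2) *\<^sub>R (x+1/2) + (1 - 1/2) *\<^sub>R (x+3/2))) \<le> (1/2) * ln (Gamma (x+1/2)) + (1 - 1/2) * ln (Gamma (x+3/2))"
    using convex_onD[OF cv, of "1/2" "x+1/2" "x+3/2"] x by simp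
  moreover have "(1/2) *\<^sub>R (x+1/2) + (1 - 1/2) *\<^sub>R (x+3/2) = x + 1" by (simp add: field_simps)
  ultimately have "2 * ln (Gamma (x + 1)) \<le> ln (Gamma (x+1/2)) + ln (Gamma (x+3/2))" by simp
  hence "ln ((Gamma (x + 1))^2) \<le> ln (Gamma (x+1/2) * Gamma (x+3/2))"
    using x pos pos' by (simp add: ln_mult ln_realpow)
  hence "(Gamma (x + 1))^2 \<le> Gamma (x+1/2) * Gamma (x+3/2)"
    using x pos pos' by (subst (asm) ln_le_cancel_iff) auto
  also have "Gamma (x+3/2) = (x+1/2) * Gamma (x+1/2)"
    using Gamma_plus1[of "x+1/2"] x by (auto simp: nonpos_Ints_def add_ac)
  also have "Gamma (x+1) = x * Gamma x" using x by (subst Gamma_plus1) (auto simp: nonpos_Ints_def)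
  finally show "x^2 * (Gamma x)^2 \<le> (x + 1/2) * (Gamma (x + 1/2))^2" by (simp add: power2_eq_square mult_ac)
qed


lemma decay_nonneg:
  fixes f :: "nat \<Rightarrow> real" and B :: real
  assumes B: "B \<ge> 0"
    and step: "\<And>n. n \<ge> 1 \<Longrightarrow> f (n+2) \<le> ((real n + 1) / real n)^2 * f n"
    and bnd: "\<And>n. n \<ge> 1 \<Longrightarrow> f n \<ge> -B"
    and n: "n \<ge> 1"
  shows "f n \<ge> 0"
proof -
  have claim: "\<forall>n\<ge>1. f n \<ge> -B * real n / (real n + 2 * real m)" for m
  proof (induction m)
    case 0
    then show ?case using bnd by auto
  next
    case (Suc m)
    show ?case
    proof (intro allI impI)
      fix n :: nat assume n: "n \<ge> 1"
      define \<alpha> where "\<alpha> = ((real n + 1) / real n)^2"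
      have \<alpha>pos: "\<alpha> > 0" using n by (simp add: \<alpha>_def)
      have "f (n+2) \<ge> -B * real (n+2) / (real (n+2) + 2 * real m)" using Suc.IH[rule_format, of "n+2"] by simp
      hence "\<alpha> * f n \<ge> -B * real (n+2) / (real (n+2) + 2 * real m)"
        using step[OF n] by (simp add: \<alpha>_def)
      hence "f n \<ge> -B * real (n+2) / (real (n+2) + 2 * real m) / \<alpha>"
        using \<alpha>pos by (subst pos_divide_le_eq[OF \<alpha>pos]) (simp add: mult.commute)
      moreover have "-B * real (n+2) / (real (n+2) + 2 * real m) / \<alpha> \<ge> -B * real n / (real n + 2 * real (Suc m))"
      proof -
        have e: "real (n+2) / \<alpha> = (real n + 2) * (real n)^2 / (real n + 1)^2"
          using n by (simp add: \<alpha>_def field_simps)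
        have "(real n + 2) * (real n)^2 \<le> real n * (real n + 1)^2"
          by (simp add: power2_eq_square algebra_simps)
        hence "real (n+2) / \<alpha> \<le> real n"
          unfolding e by (subst divide_le_eq) (auto simp: mult.commute)
        hence "B * (real (n+2) / \<alpha>) / (real n + 2 * real (Suc m)) \<le> B * real n / (real n + 2 * real (Suc m))"
          using B n by (intro divide_right_mono mult_left_mono) auto
        moreover have "-B * real (n+2) / (real (n+2) + 2 * real m) / \<alpha> = -(B * (real (n+2) / \<alpha>) / (real n + 2 * real (Suc m)))"
          using \<alpha>pos by (simp add: divide_simps)
        ultimately show ?thesis by linarith
      qed
      ultimately show "f n \<ge> -B * real n / (real n + 2 * real (Suc m))" by linarith
    qed
  qed
  have lim: "(\<lambda>m. -B * real n / (real n + 2 * real m)) \<longlonglongrightarrow> 0"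
  proof -
    have "filterlim (\<lambda>m. real n + 2 * real m) at_top sequentially"
      by (intro filterlim_tendsto_add_at_top[OF tendsto_const] filterlim_tendsto_pos_mult_at_top[OF tendsto_const])
         (auto simp: filterlim_real_sequentially)
    then show ?thesis by (intro tendsto_divide_0[OF tendsto_const] filterlim_at_top_imp_at_infinity)
  qed
  show ?thesis
    using n claim by (intro tendsto_le[OF _ tendsto_const lim]) auto
qed


definition ga :: "nat \<Rightarrow> real" where
  "ga n = (Gamma ((real n + 1) / 2) / Gamma (real n / 2))^2"

lemma ga_pos: assumes "n \<ge> 1" shows "ga n > 0"
proof -
  have "Gamma (real n / 2) > 0" using assms by auto
  moreover have p: "0 < (real n + 1) / 2" by simp
  have "Gamma ((real n + 1) / 2) \<noteq> 0" using Gamma_real_pos[OF p] by linarith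
  ultimately show ?thesis unfolding ga_def by simp
qed

lemma ga_rec: assumes n: "n \<ge> 1" shows "ga n * ga (Suc n) = (real n)^2 / 4"
proof -
  have g1: "Gamma ((real n + 1) / 2) > 0" by (rule Gamma_real_pos) simp
  have g1': "Gamma (real n / 2) > 0" using n by auto
  have g2: "Gamma ((1 + real n) / 2) \<noteq> 0" "Gamma (real n / 2) \<noteq> 0" using g1 g1' by (simp_all only: add.commute)
  have "Gamma ((real (Suc n) + 1) / 2) = Gamma (real n / 2 + 1)" by (simp add: field_simps)
  also have "\<dots> = (real n / 2) * Gamma (real n / 2)"
    using n by (subst Gamma_plus1) (auto simp: nonpos_Ints_def)
  finally have e: "Gamma ((real (Suc n) + 1) / 2) = (real n / 2) * Gamma (real n / 2)" .
  have e2: "real (Suc n) / 2 = (real n + 1) / 2" by simp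
  show ?thesis unfolding ga_def e e2 using g1 g1' g2
    by (simp add: field_simps power2_eq_square)
qed

lemma ga_bounds: assumes n: "n \<ge> 1" shows "real n / 2 - 1/2 \<le> ga n" "ga n \<le> real n / 2"
proof -
  define x where "x = real n / 2"
  have x: "x > 0" using n by (simp add: x_def)
  have e: "(real n + 1) / 2 = x + 1/2" by (simp add: x_def field_simps)
  have gp: "Gamma x > 0" using x by auto
  hence gn: "Gamma x \<noteq> 0" by simp
  have ga: "ga n = (Gamma (x + 1/2))^2 / (Gamma x)^2"
    unfolding ga_def e by (simp add: power_divide x_def)
  from Gamma_half_bounds[OF x] have b1: "(Gamma (x + 1/2))^2 \<le> x * (Gamma x)^2"
    and b2: "x^2 * (Gamma x)^2 \<le> (x + 1/2) * (Gamma (x + 1/2))^2" by auto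
  show "ga n \<le> real n / 2" unfolding ga x_def[symmetric] using gp b1
    by (subst divide_le_eq) auto
  have "x^2 / (x + 1/2) \<le> ga n"
  proof -
    define y where "y = Gamma x"
    define z where "z = Gamma (x + 1/2)"
    have y: "y > 0" using gp by (simp add: y_def)
    have h: "x^2 * y^2 \<le> (x + 1/2) * z^2" using b2 by (simp add: y_def z_def)
    have "x^2 / (x + 1/2) \<le> z^2 / y^2"
      using h y x by (simp add: divide_simps, simp add: mult_ac)
    thus ?thesis unfolding ga y_def z_def .
  qed
  moreover have "x - 1/2 \<le> x^2 / (x + 1/2)" using x
    by (simp add: divide_simps power2_eq_square algebra_simps)
  ultimately show "real n / 2 - 1/2 \<le> ga n" unfolding x_def by linarith
qed

lemma ga_rec2: assumes n: "n \<ge> 1" shows "ga (n+2) = ((real n + 1) / real n)^2 * ga n"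
proof -
  have a: "ga n * ga (Suc n) = (real n)^2 / 4" using ga_rec[OF n] .
  have b: "ga (Suc n) * ga (Suc (Suc n)) = (real n + 1)^2 / 4" using ga_rec[of "Suc n"] by simp
  have p1: "ga (Suc n) > 0" using ga_pos[of "Suc n"] by simp
  have p0: "ga n > 0" using ga_pos[OF n] .
  have "ga (Suc (Suc n)) = (real n + 1)^2 / 4 / ga (Suc n)" using b p1 by (simp add: field_simps)
  also have "ga (Suc n) = (real n)^2 / 4 / ga n" using a p0 by (simp add: field_simps)
  finally show ?thesis using p0 n by (simp add: field_simps power2_eq_square)
qed

definition dd :: "nat \<Rightarrow> real" where "dd n = ga n - real n / 2 + 1/4"

lemma dd_rec: assumes n: "n \<ge> 1"
  shows "dd (n+2) = ((real n + 1) / real n)^2 * dd n - 1 / (4 * (real n)^2)"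
  unfolding dd_def ga_rec2[OF n] using n by (simp add: field_simps power2_eq_square)

lemma dd_bounds: "n \<ge> 1 \<Longrightarrow> -1/4 \<le> dd n \<and> dd n \<le> 1/4"
  using ga_bounds[of n] unfolding dd_def by auto

lemma dd_nonneg: assumes n: "n \<ge> 1" shows "dd n \<ge> 0"
proof (rule decay_nonneg[of "1/4"])
  fix m :: nat assume m: "m \<ge> 1"
  show "dd (m+2) \<le> ((real m + 1) / real m)^2 * dd m" using dd_rec[OF m] m by simp
  show "dd m \<ge> -(1/4)" using dd_bounds[OF m] by simp
qed (use n in auto)

lemma dd_upper: assumes n: "n \<ge> 1" shows "dd n \<le> 1 / (8 * real n)"
proof -
  have "1 / (8 * real n) - dd n \<ge> 0"
  proof (rule decay_nonneg[of "1/4", where f = "\<lambda>n. 1 / (8 * real n) - dd n"])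
    fix m :: nat assume m: "m \<ge> 1"
    have key: "1 / (8 * (real m + 2)) + 1 / (4 * (real m)^2) \<le> ((real m + 1) / real m)^2 / (8 * real m)"
    proof -
      have "(real m)^3 + 2 * real m * (real m + 2) \<le> (real m + 1)^2 * (real m + 2)"
        using m by (simp add: power2_eq_square power3_eq_cube algebra_simps)
      thus ?thesis using m by (simp add: divide_simps power2_eq_square power3_eq_cube) (simp add: algebra_simps)
    qed
    show "1 / (8 * real (m+2)) - dd (m+2) \<le> ((real m + 1) / real m)^2 * (1 / (8 * real m) - dd m)"
      unfolding dd_rec[OF m] using key by (simp add: algebra_simps)
    have "1 / (8 * real m) > 0" using m by simp
    thus "1 / (8 * real m) - dd m \<ge> -(1/4)" using dd_bounds[OF m] by linarith
  qed (use n in auto)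
  thus ?thesis by simp
qed

lemma dd_mono: assumes n: "n \<ge> 1" shows "dd (Suc n) \<le> dd n"
proof -
  have "dd n - dd (n+1) \<ge> 0"
  proof (rule decay_nonneg[of "1/2", where f = "\<lambda>n. dd n - dd (n+1)"])
    fix m :: nat assume m: "m \<ge> 1"
    define a0 where "a0 = ((real m + 1) / real m)^2"
    define a1 where "a1 = ((real m + 2) / (real m + 1))^2"
    have ea: "a0 - a1 = (2 * (real m)^2 + 4 * real m + 1) / ((real m)^2 * (real m + 1)^2)"
      using m unfolding a0_def a1_def by (simp add: divide_simps) (simp add: power2_eq_square power4_eq_xxxx algebra_simps)
    have eb: "1 / (4 * (real m)^2) - 1 / (4 * (real m + 1)^2) = (2 * real m + 1) / (4 * (real m)^2 * (real m + 1)^2)"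
      using m by (simp add: divide_simps) (simp add: power2_eq_square algebra_simps)
    have apos: "a0 - a1 \<ge> 0" unfolding ea by simp
    have d1: "dd (m+1) \<le> 1 / (8 * (real m + 1))" using dd_upper[of "m+1"] by (simp add: add.commute)
    have "(a0 - a1) * dd (m+1) \<le> (a0 - a1) * (1 / (8 * (real m + 1)))"
      by (rule mult_left_mono[OF d1 apos])
    also have "\<dots> \<le> 1 / (4 * (real m)^2) - 1 / (4 * (real m + 1)^2)"
    proof -
      have "(2 * (real m)^2 + 4 * real m + 1) \<le> 2 * (real m + 1) * (2 * real m + 1)"
        by (simp add: power2_eq_square algebra_simps)
      thus ?thesis unfolding ea eb using m
        by (simp add: divide_simps) (simp add: power2_eq_square algebra_simps)
    qed
    finally have key: "(a0 - a1) * dd (m+1) \<le> 1 / (4 * (real m)^2) - 1 / (4 * (real m + 1)^2)" .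
    have r0: "dd (m+2) = a0 * dd m - 1 / (4 * (real m)^2)" using dd_rec[OF m] by (simp add: a0_def)
    have r1: "dd (m+1+2) = a1 * dd (m+1) - 1 / (4 * (real m + 1)^2)"
      using dd_rec[of "m+1"] by (simp add: a1_def add_ac)
    show "dd (m+2) - dd (m+2+1) \<le> ((real m + 1) / real m)^2 * (dd m - dd (m+1))"
      using r0 r1 key unfolding a0_def[symmetric] by (simp add: algebra_simps)
    show "dd m - dd (m+1) \<ge> -(1/2)" using dd_bounds[OF m] dd_bounds[of "m+1"] by auto
  qed (use n in auto)
  thus ?thesis by simp
qed

lemma dd_lim: "dd \<longlonglongrightarrow> 0"
proof (rule tendsto_sandwich[of "\<lambda>_. 0" _ _ "\<lambda>n. 1 / (8 * real n)"])
  show "\<forall>\<^sub>F n in sequentially. 0 \<le> dd n"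
    using eventually_ge_at_top[of "1::nat"] by eventually_elim (rule dd_nonneg)
  show "\<forall>\<^sub>F n in sequentially. dd n \<le> 1 / (8 * real n)"
    using eventually_ge_at_top[of "1::nat"] by eventually_elim (rule dd_upper)
  show "(\<lambda>n. 1 / (8 * real n)) \<longlonglongrightarrow> 0"
    by (intro tendsto_divide_0[OF tendsto_const] filterlim_at_top_imp_at_infinity
        filterlim_tendsto_pos_mult_at_top[OF tendsto_const]) (auto simp: filterlim_real_sequentially)
qed simp



lemma insort_nth:
  fixes x :: real
  assumes "sorted ys" "i \<le> length ys"
  shows "insort x ys ! i =
    (if i = 0 then (if ys = [] then x else min x (ys ! 0))
     else if i < length ys then max (ys ! (i - 1)) (min x (ys ! i))
     else max (ys ! (i - 1)) x)"
  using assms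
proof (induction ys arbitrary: i)
  case Nil
  then show ?case by simp
next
  case (Cons y ys)
  have yle: "\<And>k. k < length ys \<Longrightarrow> y \<le> ys ! k" using Cons.prems(1) by (auto simp: nth_mem)
  have sys: "sorted ys" using Cons.prems(1) by simp
  show ?case
  proof (cases i)
    case 0
    then show ?thesis by (auto simp: min_def)
  next
    case (Suc j)
    have jle: "j \<le> length ys" using Cons.prems(2) Suc by simp
    show ?thesis
    proof (cases "x \<le> y")
      case True
      have "(y # ys) ! j \<ge> y" using yle jle by (cases j) auto
      moreover have "j < length ys \<Longrightarrow> ys ! j \<ge> y" using yle by auto
      ultimately show ?thesis using True Suc jle by (auto simp: min_def max_def)
    next
      case False
      have IH: "insort x ys ! j = (if j = 0 then (if ys = [] then x else min x (ys ! 0))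
         else if j < length ys then max (ys ! (j - 1)) (min x (ys ! j))
         else max (ys ! (j - 1)) x)" using Cons.IH[OF sys jle] .
      show ?thesis
      proof (cases j)
        case 0
        then show ?thesis using False Suc IH yle[of 0] by (auto simp: min_def max_def)
      next
        case (Suc k)
        then show ?thesis using False \<open>i = Suc j\<close> IH by auto
      qed
    qed
  qed
qed

lemma measurable_sort_nth:
  fixes F :: "'a \<Rightarrow> nat \<Rightarrow> real"
  assumes "\<And>j. j \<in> set xs \<Longrightarrow> (\<lambda>\<omega>. F \<omega> j) \<in> borel_measurable M"
  shows "i < length xs \<Longrightarrow> (\<lambda>\<omega>. sort (map (F \<omega>) xs) ! i) \<in> borel_measurable M"
  using assms
proof (induction xs arbitrary: i)
  case Nil
  then show ?case by simp
next
  case (Cons a xs)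
  have IH: "\<And>k. k < length xs \<Longrightarrow> (\<lambda>\<omega>. sort (map (F \<omega>) xs) ! k) \<in> borel_measurable M"
    using Cons by auto
  have ma: "(\<lambda>\<omega>. F \<omega> a) \<in> borel_measurable M" using Cons by auto
  have eq: "(\<lambda>\<omega>. sort (map (F \<omega>) (a # xs)) ! i) = (\<lambda>\<omega>.
    (if i = 0 then (if xs = [] then F \<omega> a else min (F \<omega> a) (sort (map (F \<omega>) xs) ! 0))
     else if i < length xs then max (sort (map (F \<omega>) xs) ! (i - 1)) (min (F \<omega> a) (sort (map (F \<omega>) xs) ! i))
     else max (sort (map (F \<omega>) xs) ! (i - 1)) (F \<omega> a)))"
  proof (intro ext)
    fix \<omega>
    have e: "sort (map (F \<omega>) xs) = [] \<longleftrightarrow> xs = []"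
      by (metis length_sort length_map length_0_conv)
    show "sort (map (F \<omega>) (a # xs)) ! i = (if i = 0 then (if xs = [] then F \<omega> a else min (F \<omega> a) (sort (map (F \<omega>) xs) ! 0))
     else if i < length xs then max (sort (map (F \<omega>) xs) ! (i - 1)) (min (F \<omega> a) (sort (map (F \<omega>) xs) ! i))
     else max (sort (map (F \<omega>) xs) ! (i - 1)) (F \<omega> a))"
      using Cons.prems(1) by (simp add: insort_nth e)
  qed
  show ?case unfolding eq using Cons.prems(1) ma
    by (cases "i = 0"; cases "xs = []"; cases "i < length xs")
       (auto intro!: borel_measurable_max borel_measurable_min IH)
qed


lemma rvar_expand:
  assumes P: "prob_space M" and [measurable]: "Y \<in> borel_measurable M"
    and I2: "integrable M (\<lambda>\<omega>. (Y \<omega>)^2)"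
  shows "rvar M Y = (\<integral>\<omega>. (Y \<omega>)^2 \<partial>M) - (\<integral>\<omega>. Y \<omega> \<partial>M)^2"
proof -
  interpret prob_space M by (rule P)
  have I1: "integrable M Y" by (rule square_integrable_imp_integrable[OF _ I2]) simp
  define c where "c = (\<integral>\<omega>. Y \<omega> \<partial>M)"
  have "(\<lambda>\<omega>. (Y \<omega> - c)^2) = (\<lambda>\<omega>. (Y \<omega>)^2 - 2 * c * Y \<omega> + c^2)"
    by (simp add: power2_eq_square algebra_simps)
  hence "rvar M Y = (\<integral>\<omega>. (Y \<omega>)^2 - 2 * c * Y \<omega> + c^2 \<partial>M)"
    unfolding rvar_def c_def by simp
  also have "\<dots> = (\<integral>\<omega>. (Y \<omega>)^2 \<partial>M) - 2 * c * c + c^2"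
    using I1 I2 by (simp add: c_def prob_space)
  finally show ?thesis by (simp add: c_def power2_eq_square)
qed

lemma sum_sort_map:
  fixes g :: "real \<Rightarrow> real"
  shows "(\<Sum>i<n. g (sort (map x [0..<n]) ! i)) = (\<Sum>i<n. g (x i))"
proof -
  have "(\<Sum>i<n. g (sort (map x [0..<n]) ! i)) = sum_list (map g (sort (map x [0..<n])))"
    by (simp add: sum_list_sum_nth atLeast0LessThan)
  also have "\<dots> = sum_mset (mset (map g (sort (map x [0..<n]))))" by (simp only: sum_mset_sum_list)
  also have "\<dots> = sum_mset (mset (map g (map x [0..<n])))" by (simp only: mset_map mset_sort)
  also have "\<dots> = sum_list (map g (map x [0..<n]))" by (simp only: sum_mset_sum_list)
  also have "\<dots> = (\<Sum>i<n. g (x i))" by (simp add: sum_list_sum_nth atLeast0LessThan)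
  finally show ?thesis .
qed

lemma sort_vec_sq_le:
  assumes "i < n"
  shows "(sort_vec n x i)^2 \<le> (\<Sum>j<n. (x j)^2)"
proof -
  have "sort (map x [0..<n]) ! i \<in> set (sort (map x [0..<n]))" by (rule nth_mem) (simp add: assms)
  hence "sort (map x [0..<n]) ! i \<in> set (map x [0..<n])" by (simp only: set_sort)
  then obtain j where j: "j < n" "sort (map x [0..<n]) ! i = x j" by auto
  have "(x j)^2 \<le> (\<Sum>j<n. (x j)^2)" using j by (intro member_le_sum) auto
  thus ?thesis using j assms by (simp add: sort_vec_def)
qed

lemma part1:
  fixes M :: "'a measure" and X :: "'a \<Rightarrow> nat \<Rightarrow> real"
  assumes P: "prob_space M"
    and H: "\<forall>i<n. (\<lambda>\<omega>. X \<omega> i) \<in> borel_measurable M \<and> integrable M (\<lambda>\<omega>. (X \<omega> i)\<^sup>2)"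
  shows "vvar M n (\<lambda>\<omega>. sort_vec n (X \<omega>)) \<ge> rvar M (\<lambda>\<omega>. vnorm n (X \<omega>))"
proof -
  interpret prob_space M by (rule P)
  define S where "S = (\<lambda>\<omega>. \<Sum>j<n. (X \<omega> j)^2)"
  define s where "s = (\<lambda>\<omega> i. sort_vec n (X \<omega>) i)"
  have mX: "\<And>i. i < n \<Longrightarrow> (\<lambda>\<omega>. X \<omega> i) \<in> borel_measurable M" using H by auto
  have [measurable]: "S \<in> borel_measurable M" unfolding S_def using mX by (auto intro!: borel_measurable_sum)
  have IS: "integrable M S" unfolding S_def using H by (auto intro!: integrable_sum)
  have S0: "\<And>\<omega>. S \<omega> \<ge> 0" unfolding S_def by (auto intro!: sum_nonneg)
  have ms: "(\<lambda>\<omega>. s \<omega> i) \<in> borel_measurable M" if i: "i < n" for i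
  proof -
    have "(\<lambda>\<omega>. sort (map (\<lambda>j. X \<omega> j) [0..<n]) ! i) \<in> borel_measurable M"
      using i mX by (intro measurable_sort_nth) auto
    moreover have "(\<lambda>\<omega>. s \<omega> i) = (\<lambda>\<omega>. sort (map (\<lambda>j. X \<omega> j) [0..<n]) ! i)"
      using i by (simp add: s_def sort_vec_def)
    ultimately show ?thesis by simp
  qed
  have sq_sum: "(\<Sum>i<n. (s \<omega> i)^2) = S \<omega>" for \<omega>
  proof -
    have "(\<Sum>i<n. (s \<omega> i)^2) = (\<Sum>i<n. (sort (map (X \<omega>) [0..<n]) ! i)^2)"
      by (simp add: s_def sort_vec_def)
    also have "\<dots> = S \<omega>" unfolding S_def by (rule sum_sort_map)
    finally show ?thesis .
  qed
  have s2int: "integrable M (\<lambda>\<omega>. (s \<omega> i)^2)" if i: "i < n" for i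
  proof (rule Bochner_Integration.integrable_bound[OF IS])
    show "(\<lambda>\<omega>. (s \<omega> i)^2) \<in> borel_measurable M" using ms[OF i] by measurable
    show "AE \<omega> in M. norm ((s \<omega> i)^2) \<le> norm (S \<omega>)"
      using sort_vec_sq_le[OF i] S0 by (auto simp: s_def S_def)
  qed
  have sint: "integrable M (\<lambda>\<omega>. s \<omega> i)" if i: "i < n" for i
    by (rule square_integrable_imp_integrable[OF ms[OF i] s2int[OF i]])
  define m where "m = (\<lambda>i. \<integral>\<omega>. s \<omega> i \<partial>M)"
  have msq: "(\<lambda>\<omega>. sqrt (S \<omega>)) \<in> borel_measurable M" by measurable
  have sqS: "\<And>\<omega>. (sqrt (S \<omega>))^2 = S \<omega>" using S0 by simp
  have Isq: "integrable M (\<lambda>\<omega>. sqrt (S \<omega>))"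
    by (rule square_integrable_imp_integrable[OF msq]) (simp add: sqS IS)
  define \<mu> where "\<mu> = (\<integral>\<omega>. sqrt (S \<omega>) \<partial>M)"
  have \<mu>0: "\<mu> \<ge> 0" unfolding \<mu>_def by (rule integral_nonneg_AE) (use S0 in auto)
  have vv: "vvar M n (\<lambda>\<omega>. sort_vec n (X \<omega>)) = (\<integral>\<omega>. S \<omega> \<partial>M) - (\<Sum>i<n. (m i)^2)"
  proof -
    have "vvar M n (\<lambda>\<omega>. sort_vec n (X \<omega>)) = (\<integral>\<omega>. (\<Sum>i<n. (s \<omega> i - m i)^2) \<partial>M)"
      unfolding vvar_def vnorm_def s_def[symmetric]
      by (simp add: sum_nonneg m_def)
    also have "\<dots> = (\<Sum>i<n. (\<integral>\<omega>. (s \<omega> i - m i)^2 \<partial>M))"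
    proof (rule Bochner_Integration.integral_sum[where f="\<lambda>i \<omega>. (s \<omega> i - m i)^2"])
      fix i assume "i \<in> {..<n}"
      hence i: "i < n" by simp
      have "(\<lambda>\<omega>. (s \<omega> i - m i)^2) = (\<lambda>\<omega>. (s \<omega> i)^2 - 2 * m i * s \<omega> i + (m i)^2)"
        by (simp add: power2_eq_square algebra_simps)
      thus "integrable M (\<lambda>\<omega>. (s \<omega> i - m i)^2)" using s2int[OF i] sint[OF i] by simp
    qed
    also have "\<dots> = (\<Sum>i<n. (\<integral>\<omega>. (s \<omega> i)^2 \<partial>M) - (m i)^2)"
    proof (rule sum.cong[OF refl])
      fix i assume "i \<in> {..<n}"
      hence i: "i < n" by simp
      have "rvar M (\<lambda>\<omega>. s \<omega> i) = (\<integral>\<omega>. (s \<omega> i)^2 \<partial>M) - (m i)^2"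
        unfolding m_def by (rule rvar_expand[OF P ms[OF i] s2int[OF i]])
      thus "(\<integral>\<omega>. (s \<omega> i - m i)^2 \<partial>M) = (\<integral>\<omega>. (s \<omega> i)^2 \<partial>M) - (m i)^2"
        unfolding rvar_def m_def by simp
    qed
    also have "\<dots> = (\<Sum>i<n. (\<integral>\<omega>. (s \<omega> i)^2 \<partial>M)) - (\<Sum>i<n. (m i)^2)"
      by (simp add: sum_subtractf)
    also have "(\<Sum>i<n. (\<integral>\<omega>. (s \<omega> i)^2 \<partial>M)) = (\<integral>\<omega>. (\<Sum>i<n. (s \<omega> i)^2) \<partial>M)"
      using s2int by (intro Bochner_Integration.integral_sum[where f="\<lambda>i \<omega>. (s \<omega> i)^2", symmetric]) auto
    also have "\<dots> = (\<integral>\<omega>. S \<omega> \<partial>M)" by (simp add: sq_sum)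
    finally show ?thesis .
  qed
  have rv: "rvar M (\<lambda>\<omega>. vnorm n (X \<omega>)) = (\<integral>\<omega>. S \<omega> \<partial>M) - \<mu>^2"
  proof -
    have e: "(\<lambda>\<omega>. vnorm n (X \<omega>)) = (\<lambda>\<omega>. sqrt (S \<omega>))" by (simp add: vnorm_def S_def)
    show ?thesis unfolding e \<mu>_def
      by (subst rvar_expand[OF P msq]) (simp_all add: sqS IS)
  qed
  define q where "q = (\<Sum>i<n. (m i)^2)"
  have q0: "q \<ge> 0" unfolding q_def by (auto intro!: sum_nonneg)
  have "q = (\<integral>\<omega>. (\<Sum>i<n. m i * s \<omega> i) \<partial>M)"
  proof -
    have "(\<integral>\<omega>. (\<Sum>i<n. m i * s \<omega> i) \<partial>M) = (\<Sum>i<n. (\<integral>\<omega>. m i * s \<omega> i \<partial>M))"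
      using sint by (intro Bochner_Integration.integral_sum[where f="\<lambda>i \<omega>. m i * s \<omega> i"]) auto
    also have "\<dots> = q" unfolding q_def m_def by (simp add: power2_eq_square)
    finally show ?thesis by simp
  qed
  also have "\<dots> \<le> (\<integral>\<omega>. sqrt q * sqrt (S \<omega>) \<partial>M)"
  proof (rule integral_mono)
    show "integrable M (\<lambda>\<omega>. \<Sum>i<n. m i * s \<omega> i)" using sint by (auto intro!: integrable_sum)
    show "integrable M (\<lambda>\<omega>. sqrt q * sqrt (S \<omega>))" using Isq by simp
    fix \<omega>
    have "(\<Sum>i<n. m i * s \<omega> i)^2 \<le> q * S \<omega>"
      using Cauchy_Schwarz_ineq_sum[of m "s \<omega>" "{..<n}"] by (simp add: q_def sq_sum)
    hence "\<bar>\<Sum>i<n. m i * s \<omega> i\<bar> \<le> sqrt (q * S \<omega>)" by (metis real_sqrt_abs real_sqrt_le_mono)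
    thus "(\<Sum>i<n. m i * s \<omega> i) \<le> sqrt q * sqrt (S \<omega>)" by (simp add: real_sqrt_mult)
  qed
  also have "\<dots> = sqrt q * \<mu>" unfolding \<mu>_def by simp
  finally have qle: "q \<le> sqrt q * \<mu>" .
  have "q \<le> \<mu>^2"
  proof (cases "q = 0")
    case True thus ?thesis by simp
  next
    case False
    hence sp: "sqrt q > 0" using q0 by simp
    have "sqrt q * sqrt q \<le> sqrt q * \<mu>" using qle q0 by simp
    hence "sqrt q \<le> \<mu>" using sp by (rule mult_left_le_imp_le)
    hence "(sqrt q)^2 \<le> \<mu>^2" using sp by (intro power_mono) auto
    thus ?thesis using q0 by simp
  qed
  thus ?thesis unfolding vv rv q_def by simp
qed



lemma GL:
  fixes a l :: real assumes a: "a > 0" and l: "l > 0"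
  shows "(\<integral>\<^sup>+t. ennreal (indicator {0<..} t * t powr (a - 1) * exp (- (l * t))) \<partial>lborel)
         = ennreal (Gamma a / l powr a)"
proof -
  have "(\<integral>\<^sup>+t. ennreal (indicator {0<..} t * t powr (a - 1) * exp (- (l * t))) \<partial>lborel)
      = ennreal \<bar>1/l\<bar> * (\<integral>\<^sup>+x. ennreal (indicator {0<..} (0 + (1/l) * x) * (0 + (1/l) * x) powr (a - 1) * exp (- (l * (0 + (1/l) * x)))) \<partial>lborel)"
    using l by (intro nn_integral_real_affine) auto
  also have "(\<lambda>x. ennreal (indicator {0<..} (0 + (1/l) * x) * (0 + (1/l) * x) powr (a - 1) * exp (- (l * (0 + (1/l) * x)))))
      = (\<lambda>x. ennreal (l powr (1 - a)) * ennreal (indicator {0..} x * x powr (a - 1) / exp x))"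
  proof
    fix x :: real
    show "ennreal (indicator {0<..} (0 + (1/l) * x) * (0 + (1/l) * x) powr (a - 1) * exp (- (l * (0 + (1/l) * x))))
      = ennreal (l powr (1 - a)) * ennreal (indicator {0..} x * x powr (a - 1) / exp x)"
    proof (cases "x > 0")
      case True
      have "(x / l) powr (a - 1) = l powr (1 - a) * x powr (a - 1)"
        using True l by (simp add: powr_divide powr_diff powr_minus divide_simps)
      thus ?thesis using True l
        by (simp add: ennreal_mult'[symmetric] indicator_def exp_minus field_simps)
    next
      case False
      moreover have "x = 0 \<Longrightarrow> x powr (a - 1) = 0" by simp
      ultimately show ?thesis using l by (auto simp: indicator_def zero_less_mult_iff zero_less_divide_iff)
    qed
  qed
  also have "(\<integral>\<^sup>+x. ennreal (l powr (1 - a)) * ennreal (indicator {0..} x * x powr (a - 1) / exp x) \<partial>lborel)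
      = ennreal (l powr (1 - a)) * ennreal (Gamma a)"
    using a by (subst nn_integral_cmult) (auto simp: Gamma_conv_nn_integral_real)
  also have "ennreal \<bar>1/l\<bar> * (ennreal (l powr (1 - a)) * ennreal (Gamma a)) = ennreal (Gamma a / l powr a)"
  proof -
    have "\<bar>1/l\<bar> * (l powr (1 - a) * Gamma a) = Gamma a / l powr a"
      using l by (simp add: powr_diff field_simps)
    thus ?thesis using l a by (simp add: ennreal_mult'[symmetric] Gamma_real_pos less_imp_le)
  qed
  finally show ?thesis .
qed


lemma std_normal_exp_eq:
  fixes t y :: real assumes t: "t \<ge> 0"
  shows "std_normal_density y * exp (- (t * y^2)) = (1 / sqrt (1 + 2*t)) * normal_density 0 (1 / sqrt (1 + 2*t)) y"
proof -
  define r where "r = 1 + 2*t"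
  have r: "r > 0" using t by (simp add: r_def)
  have e1: "(1 / sqrt r)^2 = 1 / r" using r by (simp add: power_divide)
  have A: "normal_density 0 (1 / sqrt r) y = sqrt r / sqrt (2 * pi) * exp (- (r * y^2) / 2)"
    unfolding normal_density_def e1 using r
    by (simp add: real_sqrt_divide field_simps)
  have B: "std_normal_density y * exp (- (t * y^2)) = 1 / sqrt (2 * pi) * exp (- (r * y^2) / 2)"
    unfolding std_normal_density_def r_def
    by (simp add: mult.assoc exp_add[symmetric] field_simps)
  have C: "(1 / sqrt r) * normal_density 0 (1 / sqrt r) y = 1 / sqrt (2 * pi) * exp (- (r * y^2) / 2)"
    unfolding A using r by simp
  show ?thesis unfolding r_def[symmetric] B C ..
qed

lemma nn_normal_density: assumes "\<sigma> > 0" shows "(\<integral>\<^sup>+y. ennreal (normal_density \<mu> \<sigma> y) \<partial>lborel) = 1"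
  using integrable_normal_density[OF assms] integral_normal_density[OF assms]
  by (subst nn_integral_eq_integral) (auto simp: normal_density_nonneg)

lemma nn_normal_second: assumes "\<sigma> > 0" shows
  "(\<integral>\<^sup>+y. ennreal (normal_density 0 \<sigma> y * y^2) \<partial>lborel) = ennreal (\<sigma>^2)"
proof -
  have "has_bochner_integral lborel (\<lambda>x. normal_density 0 \<sigma> x * (x - 0) ^ (2 * 1)) (fact (2 * 1) / ((2 / \<sigma>\<^sup>2)^1 * fact 1))"
    using assms by (rule normal_moment_even)
  hence h: "has_bochner_integral lborel (\<lambda>x. normal_density 0 \<sigma> x * x^2) (\<sigma>^2)"
    using assms by (simp add: field_simps power2_eq_square mult_ac)
  show ?thesis
    using h by (subst nn_integral_eq_integral) (auto simp: has_bochner_integral_iff normal_density_nonneg)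
qed

definition NN :: "real measure" where "NN = density lborel std_normal_density"

lemma G0:
  fixes t :: real assumes t: "t \<ge> 0"
  shows "(\<integral>\<^sup>+y. ennreal (exp (- (t * y^2))) \<partial>NN) = ennreal (1 / sqrt (1 + 2*t))"
proof -
  have "(\<integral>\<^sup>+y. ennreal (exp (- (t * y^2))) \<partial>NN) = (\<integral>\<^sup>+y. ennreal (std_normal_density y) * ennreal (exp (- (t * y^2))) \<partial>lborel)"
    unfolding NN_def by (subst nn_integral_density) auto
  also have "\<dots> = (\<integral>\<^sup>+y. ennreal (1 / sqrt (1 + 2*t)) * ennreal (normal_density 0 (1 / sqrt (1 + 2*t)) y) \<partial>lborel)"
    using t by (intro nn_integral_cong) (simp add: ennreal_mult'[symmetric] std_normal_exp_eq)
  also have "\<dots> = ennreal (1 / sqrt (1 + 2*t))"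
    using t by (subst nn_integral_cmult) (auto simp: nn_normal_density)
  finally show ?thesis .
qed

lemma G2:
  fixes t :: real assumes t: "t \<ge> 0"
  shows "(\<integral>\<^sup>+y. ennreal (y^2 * exp (- (t * y^2))) \<partial>NN) = ennreal ((1 / sqrt (1 + 2*t))^3)"
proof -
  have "(\<integral>\<^sup>+y. ennreal (y^2 * exp (- (t * y^2))) \<partial>NN) = (\<integral>\<^sup>+y. ennreal (std_normal_density y) * ennreal (y^2 * exp (- (t * y^2))) \<partial>lborel)"
    unfolding NN_def by (subst nn_integral_density) auto
  also have "\<dots> = (\<integral>\<^sup>+y. ennreal (1 / sqrt (1 + 2*t)) * ennreal (normal_density 0 (1 / sqrt (1 + 2*t)) y * y^2) \<partial>lborel)"
  proof (intro nn_integral_cong)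
    fix y :: real
    have "std_normal_density y * (y^2 * exp (- (t * y^2))) = y^2 * (std_normal_density y * exp (- (t * y^2)))"
      by (simp add: mult_ac)
    also have "\<dots> = y^2 * ((1 / sqrt (1 + 2*t)) * normal_density 0 (1 / sqrt (1 + 2*t)) y)"
      by (simp only: std_normal_exp_eq[OF t])
    also have "\<dots> = (1 / sqrt (1 + 2*t)) * (normal_density 0 (1 / sqrt (1 + 2*t)) y * y^2)"
      by (simp only: mult_ac)
    finally have "std_normal_density y * (y^2 * exp (- (t * y^2))) = (1 / sqrt (1 + 2*t)) * (normal_density 0 (1 / sqrt (1 + 2*t)) y * y^2)" .
    thus "ennreal (std_normal_density y) * ennreal (y^2 * exp (- (t * y^2))) = ennreal (1 / sqrt (1 + 2*t)) * ennreal (normal_density 0 (1 / sqrt (1 + 2*t)) y * y^2)"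
      using t by (simp add: ennreal_mult'[symmetric] ennreal_mult''[symmetric] normal_density_nonneg)
  qed
  also have "\<dots> = ennreal (1 / sqrt (1 + 2*t)) * ennreal ((1 / sqrt (1 + 2*t))^2)"
    using t by (subst nn_integral_cmult) (auto simp: nn_normal_second)
  also have "\<dots> = ennreal ((1 / sqrt (1 + 2*t))^3)"
    using t by (simp add: ennreal_mult'[symmetric] power3_eq_cube power2_eq_square)
  finally show ?thesis .
qed


lemma prob_NN: "prob_space NN"
  unfolding NN_def by (rule prob_space_normal_density) simp

lemma sets_NN[measurable_cong]: "sets NN = sets borel"
  by (simp add: NN_def)

lemma std_gauss_NN: "std_gauss n = PiM {..<n} (\<lambda>_. NN)"
  unfolding std_gauss_def NN_def ..

lemma prod_if_one:
  fixes a b :: "'b::comm_monoid_mult"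
  assumes "i < n"
  shows "(\<Prod>j<n. if j = i then a else b) = a * b^(n - 1)"
proof -
  have "(\<Prod>j<n. if j = i then a else b) = (if i = i then a else b) * (\<Prod>j\<in>{..<n} - {i}. if j = i then a else b)"
    using assms by (intro prod.remove) auto
  also have "(\<Prod>j\<in>{..<n} - {i}. if j = i then a else b) = (\<Prod>j\<in>{..<n} - {i}. b)"
    by (intro prod.cong) auto
  also have "\<dots> = b^(n-1)" using assms by simp
  finally show ?thesis by simp
qed

lemma gauss_prod:
  fixes t :: real assumes t: "t \<ge> 0"
  shows "(\<integral>\<^sup>+x. ennreal ((\<Sum>j<n. (x j)^2) * exp (- (t * (\<Sum>j<n. (x j)^2)))) \<partial>std_gauss n)
       = ennreal (real n * (1 / sqrt (1 + 2*t))^(n+2))"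
proof -
  interpret P: product_prob_space "\<lambda>_::nat. NN" "{..<n}"
    using prob_NN by (simp add: product_prob_space_def product_sigma_finite_def product_prob_space_axioms_def prob_space_imp_sigma_finite)
  define \<sigma> where "\<sigma> = 1 / sqrt (1 + 2*t)"
  have \<sigma>0: "\<sigma> \<ge> 0" unfolding \<sigma>_def using t by simp
  define g where "g = (\<lambda>(i::nat) (j::nat) (y::real). (if j = i then y^2 else 1) * exp (- (t * y^2)))"
  have g0: "\<And>i j y. g i j y \<ge> 0" unfolding g_def by auto
  have pw: "ennreal ((\<Sum>j<n. (x j)^2) * exp (- (t * (\<Sum>j<n. (x j)^2))))
      = (\<Sum>i<n. \<Prod>j<n. ennreal (g i j (x j)))" for x :: "nat \<Rightarrow> real"
  proof -
    have e: "exp (- (t * (\<Sum>j<n. (x j)^2))) = (\<Prod>j<n. exp (- (t * (x j)^2)))"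
      by (simp add: sum_distrib_left sum_negf[symmetric] exp_sum)
    have "(\<Sum>j<n. (x j)^2) * exp (- (t * (\<Sum>j<n. (x j)^2))) = (\<Sum>i<n. \<Prod>j<n. g i j (x j))"
    proof -
      have "(\<Prod>j<n. g i j (x j)) = (x i)^2 * (\<Prod>j<n. exp (- (t * (x j)^2)))" if "i < n" for i
      proof -
        have "(\<Prod>j<n. g i j (x j)) = (\<Prod>j<n. (if j = i then (x j)^2 else 1)) * (\<Prod>j<n. exp (- (t * (x j)^2)))"
          unfolding g_def by (simp add: prod.distrib)
        also have "(\<Prod>j<n. (if j = i then (x j)^2 else 1)) = (x i)^2"
          using that by (simp add: prod.delta)
        finally show ?thesis .
      qed
      hence "(\<Sum>i<n. \<Prod>j<n. g i j (x j)) = (\<Sum>i<n. (x i)^2 * (\<Prod>j<n. exp (- (t * (x j)^2))))"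
        by (intro sum.cong) auto
      thus ?thesis unfolding e by (simp add: sum_distrib_right)
    qed
    thus ?thesis using g0 by (simp add: prod_ennreal prod_nonneg sum_nonneg)
  qed
  have "(\<integral>\<^sup>+x. ennreal ((\<Sum>j<n. (x j)^2) * exp (- (t * (\<Sum>j<n. (x j)^2)))) \<partial>std_gauss n)
      = (\<integral>\<^sup>+x. (\<Sum>i<n. \<Prod>j<n. ennreal (g i j (x j))) \<partial>PiM {..<n} (\<lambda>_. NN))"
    unfolding std_gauss_NN pw ..
  also have "\<dots> = (\<Sum>i<n. \<integral>\<^sup>+x. (\<Prod>j<n. ennreal (g i j (x j))) \<partial>PiM {..<n} (\<lambda>_. NN))"
    by (rule nn_integral_sum) (unfold g_def, measurable)
  also have "\<dots> = (\<Sum>i<n. \<Prod>j<n. \<integral>\<^sup>+y. ennreal (g i j y) \<partial>NN)"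
    by (intro sum.cong refl P.product_nn_integral_prod) (auto simp: g_def)
  also have "\<dots> = (\<Sum>i<n. \<Prod>j<n. ennreal (if j = i then \<sigma>^3 else \<sigma>))"
  proof (intro sum.cong prod.cong refl)
    fix i j
    show "(\<integral>\<^sup>+y. ennreal (g i j y) \<partial>NN) = ennreal (if j = i then \<sigma>^3 else \<sigma>)"
      using G0[OF t] G2[OF t] by (simp add: g_def \<sigma>_def)
  qed
  also have "\<dots> = (\<Sum>i<n. ennreal (\<sigma>^(n+2)))"
  proof (intro sum.cong refl)
    fix i assume "i \<in> {..<n}"
    hence i: "i < n" by simp
    have "(\<Prod>j<n. ennreal (if j = i then \<sigma>^3 else \<sigma>)) = ennreal (\<Prod>j<n. (if j = i then \<sigma>^3 else \<sigma>))"
      using \<sigma>0 by (intro prod_ennreal) auto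
    also have "(\<Prod>j<n. (if j = i then \<sigma>^3 else \<sigma>)) = \<sigma>^3 * \<sigma>^(n-1)" by (rule prod_if_one[OF i])
    also have "\<dots> = \<sigma>^(n+2)" using i by (simp add: power_add[symmetric])
    finally show "(\<Prod>j<n. ennreal (if j = i then \<sigma>^3 else \<sigma>)) = ennreal (\<sigma>^(n+2))" .
  qed
  also have "\<dots> = ennreal (real n * \<sigma>^(n+2))"
    using \<sigma>0 by (simp add: ennreal_mult' ennreal_of_nat_eq_real_of_nat)
  finally show ?thesis unfolding \<sigma>_def .
qed


lemma inv_sqrt_pow:
  fixes r :: real assumes r: "r > 0"
  shows "(1 / sqrt r)^m = 1 / r powr (real m / 2)"
proof -
  have "sqrt r = r powr (1/2)" using r by (simp add: powr_half_sqrt)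
  hence "(sqrt r)^m = r powr (real m / 2)"
    using r by (simp add: powr_realpow[symmetric] powr_powr)
  thus ?thesis by (simp add: power_one_over)
qed

lemma J_integral:
  fixes n :: nat
  defines "c \<equiv> real n / 2 + 1"
  shows "(\<integral>\<^sup>+t. ennreal (indicator {0<..} t * t powr (1/2 - 1) * (1 / sqrt (1 + 2*t))^(n+2)) \<partial>lborel)
     = ennreal (Gamma (1/2) / (sqrt 2 * Gamma c) * Gamma (c - 1/2))"
proof -
  have c0: "c > 0" "c - 1/2 > 0" by (simp_all add: c_def)
  have Gc: "Gamma c > 0" using c0 by simp
  define h where "h = (\<lambda>t u::real. indicator {0<..} t * t powr (1/2 - 1) *
      (indicator {0<..} u * u powr (c - 1) * exp (- ((1 + 2*t) * u))) / Gamma c)"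
  have h0: "\<And>t u. h t u \<ge> 0" unfolding h_def using Gc by (auto simp: indicator_def)
  have J1: "ennreal (indicator {0<..} t * t powr (1/2 - 1) * (1 / sqrt (1 + 2*t))^(n+2))
      = (\<integral>\<^sup>+u. ennreal (h t u) \<partial>lborel)" for t :: real
  proof (cases "t > 0")
    case True
    define K where "K = indicator {0<..} t * t powr (1/2 - 1) / Gamma c"
    have K0: "K \<ge> 0" unfolding K_def using Gc by simp
    have "(\<integral>\<^sup>+u. ennreal (h t u) \<partial>lborel)
        = (\<integral>\<^sup>+u. ennreal K * ennreal (indicator {0<..} u * u powr (c - 1) * exp (- ((1 + 2*t) * u))) \<partial>lborel)"
    proof (intro nn_integral_cong)
      fix u
      have "h t u = K * (indicator {0<..} u * u powr (c - 1) * exp (- ((1 + 2*t) * u)))"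
        by (simp add: h_def K_def)
      thus "ennreal (h t u) = ennreal K * ennreal (indicator {0<..} u * u powr (c - 1) * exp (- ((1 + 2*t) * u)))"
        using K0 by (simp add: ennreal_mult')
    qed
    also have "\<dots> = ennreal K * ennreal (Gamma c / (1 + 2*t) powr c)"
      using True c0 by (subst nn_integral_cmult) (auto simp: GL)
    also have "\<dots> = ennreal (K * (Gamma c / (1 + 2*t) powr c))"
      by (rule ennreal_mult'[symmetric, OF K0])
    also have "K * (Gamma c / (1 + 2*t) powr c) = indicator {0<..} t * t powr (1/2 - 1) * (1 / sqrt (1 + 2*t))^(n+2)"
    proof -
      have "(1 / sqrt (1 + 2*t))^(n+2) = 1 / (1 + 2*t) powr c"
        using True by (subst inv_sqrt_pow) (simp_all add: c_def add_divide_distrib add.commute)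
      thus ?thesis using Gc by (simp add: K_def)
    qed
    finally show ?thesis ..
  next
    case False
    hence "\<And>u. h t u = 0" by (simp add: h_def)
    thus ?thesis using False by simp
  qed
  have J3: "(\<integral>\<^sup>+t. ennreal (h t u) \<partial>lborel)
      = ennreal (indicator {0<..} u * u powr ((c - 1/2) - 1) * exp (- (1 * u)) * (Gamma (1/2) / (sqrt 2 * Gamma c)))" for u :: real
  proof (cases "u > 0")
    case True
    define K where "K = u powr (c - 1) * exp (- u) / Gamma c"
    have K0: "K \<ge> 0" unfolding K_def using Gc by simp
    have "(\<integral>\<^sup>+t. ennreal (h t u) \<partial>lborel)
        = (\<integral>\<^sup>+t. ennreal K * ennreal (indicator {0<..} t * t powr (1/2 - 1) * exp (- ((2*u) * t))) \<partial>lborel)"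
    proof (intro nn_integral_cong)
      fix t :: real
      have "exp (- ((1 + 2*t) * u)) = exp (- u) * exp (- ((2*u) * t))"
        by (simp add: exp_add[symmetric] algebra_simps)
      hence "h t u = K * (indicator {0<..} t * t powr (1/2 - 1) * exp (- ((2*u) * t)))"
        using True by (simp add: h_def K_def)
      thus "ennreal (h t u) = ennreal K * ennreal (indicator {0<..} t * t powr (1/2 - 1) * exp (- ((2*u) * t)))"
        using K0 by (simp add: ennreal_mult')
    qed
    also have "\<dots> = ennreal K * ennreal (Gamma (1/2) / (2*u) powr (1/2))"
      using True GL[of "1/2" "2*u"] by (subst nn_integral_cmult) auto
    also have "\<dots> = ennreal (K * (Gamma (1/2) / (2*u) powr (1/2)))"
      by (rule ennreal_mult'[symmetric, OF K0])
    also have "K * (Gamma (1/2) / (2*u) powr (1/2)) = indicator {0<..} u * u powr ((c - 1/2) - 1) * exp (- (1 * u)) * (Gamma (1/2) / (sqrt 2 * Gamma c))"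
    proof -
      have "(2*u) powr (1/2) = sqrt 2 * u powr (1/2)" using True by (simp add: powr_mult powr_half_sqrt)
      moreover have "u powr (c - 1) = u powr ((c - 1/2) - 1) * u powr (1/2)"
        using True by (simp add: powr_add[symmetric])
      ultimately show ?thesis using True Gc by (simp add: K_def field_simps)
    qed
    finally show ?thesis .
  next
    case False
    hence "\<And>t. h t u = 0" by (simp add: h_def)
    thus ?thesis using False by simp
  qed
  have "(\<integral>\<^sup>+t. ennreal (indicator {0<..} t * t powr (1/2 - 1) * (1 / sqrt (1 + 2*t))^(n+2)) \<partial>lborel)
      = (\<integral>\<^sup>+t. \<integral>\<^sup>+u. ennreal (h t u) \<partial>lborel \<partial>lborel)"
    by (simp only: J1)
  also have "\<dots> = (\<integral>\<^sup>+u. \<integral>\<^sup>+t. ennreal (h t u) \<partial>lborel \<partial>lborel)"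
    by (rule lborel_pair.Fubini'[symmetric]) (unfold h_def, measurable)
  also have "\<dots> = (\<integral>\<^sup>+u. ennreal (Gamma (1/2) / (sqrt 2 * Gamma c)) * ennreal (indicator {0<..} u * u powr ((c - 1/2) - 1) * exp (- (1 * u))) \<partial>lborel)"
    unfolding J3 using Gc by (intro nn_integral_cong) (simp add: ennreal_mult'[symmetric] mult_ac)
  also have "\<dots> = ennreal (Gamma (1/2) / (sqrt 2 * Gamma c)) * ennreal (Gamma (c - 1/2) / 1 powr (c - 1/2))"
    using c0 GL[of "c - 1/2" 1] by (subst nn_integral_cmult) auto
  also have "\<dots> = ennreal (Gamma (1/2) / (sqrt 2 * Gamma c) * (Gamma (c - 1/2) / 1 powr (c - 1/2)))"
    by (rule ennreal_mult'[symmetric]) (use Gc in simp)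
  also have "\<dots> = ennreal (Gamma (1/2) / (sqrt 2 * Gamma c) * Gamma (c - 1/2))"
    by simp
  finally show ?thesis .
qed


lemma sqrt_repr:
  fixes s :: real assumes s: "s \<ge> 0"
  shows "ennreal (sqrt s) = (\<integral>\<^sup>+t. ennreal (indicator {0<..} t * t powr (1/2 - 1) / sqrt pi * (s * exp (- (t * s)))) \<partial>lborel)"
proof (cases "s > 0")
  case True
  have "(\<integral>\<^sup>+t. ennreal (indicator {0<..} t * t powr (1/2 - 1) / sqrt pi * (s * exp (- (t * s)))) \<partial>lborel)
     = (\<integral>\<^sup>+t. ennreal (s / sqrt pi) * ennreal (indicator {0<..} t * t powr (1/2 - 1) * exp (- (s * t))) \<partial>lborel)"
  proof (intro nn_integral_cong)
    fix t :: real
    have eq: "indicator {0<..} t * t powr (1/2 - 1) / sqrt pi * (s * exp (- (t * s)))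
        = (s / sqrt pi) * (indicator {0<..} t * t powr (1/2 - 1) * exp (- (s * t)))"
      by (simp add: mult_ac)
    show "ennreal (indicator {0<..} t * t powr (1/2 - 1) / sqrt pi * (s * exp (- (t * s))))
        = ennreal (s / sqrt pi) * ennreal (indicator {0<..} t * t powr (1/2 - 1) * exp (- (s * t)))"
      unfolding eq by (rule ennreal_mult') (use True in simp)
  qed
  also have "\<dots> = ennreal (s / sqrt pi) * ennreal (Gamma (1/2) / s powr (1/2))"
    using True GL[of "1/2" s] by (subst nn_integral_cmult) auto
  also have "\<dots> = ennreal (s / sqrt pi * (Gamma (1/2) / s powr (1/2)))"
    by (rule ennreal_mult'[symmetric]) (use True in simp)
  also have "s / sqrt pi * (Gamma (1/2) / s powr (1/2)) = sqrt s"
  proof -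
    have "s powr (1/2) = sqrt s" using True by (simp add: powr_half_sqrt)
    moreover have "s / sqrt s = sqrt s" using True by (simp add: real_div_sqrt)
    ultimately show ?thesis using True by (simp add: Gamma_one_half_real)
  qed
  finally show ?thesis ..
next
  case False
  hence "s = 0" using s by simp
  thus ?thesis by simp
qed

lemma gauss_sqrt_mean:
  fixes n :: nat assumes n: "n \<ge> 1"
  shows "(\<integral>\<^sup>+x. ennreal (sqrt (\<Sum>j<n. (x j)^2)) \<partial>std_gauss n)
       = ennreal (sqrt 2 * Gamma ((real n + 1) / 2) / Gamma (real n / 2))"
proof -
  have PG: "prob_space (std_gauss n)" unfolding std_gauss_NN by (intro prob_space_PiM prob_NN)
  interpret PS: pair_sigma_finite "std_gauss n" lborel
    using PG by (simp add: pair_sigma_finite_def prob_space_imp_sigma_finite lborel.sigma_finite_measure_axioms)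
  define c where "c = real n / 2 + 1"
  define F where "F = (\<lambda>(x::nat\<Rightarrow>real) (t::real). ennreal (indicator {0<..} t * t powr (1/2 - 1) / sqrt pi *
      ((\<Sum>j<n. (x j)^2) * exp (- (t * (\<Sum>j<n. (x j)^2))))))"
  have "(\<integral>\<^sup>+x. ennreal (sqrt (\<Sum>j<n. (x j)^2)) \<partial>std_gauss n) = (\<integral>\<^sup>+x. \<integral>\<^sup>+t. F x t \<partial>lborel \<partial>std_gauss n)"
    unfolding F_def by (intro nn_integral_cong sqrt_repr) (auto intro!: sum_nonneg)
  also have "\<dots> = (\<integral>\<^sup>+t. \<integral>\<^sup>+x. F x t \<partial>std_gauss n \<partial>lborel)"
    by (rule PS.Fubini'[symmetric]) (unfold F_def std_gauss_NN, measurable)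
  also have "\<dots> = (\<integral>\<^sup>+t. ennreal (real n / sqrt pi) * ennreal (indicator {0<..} t * t powr (1/2 - 1) * (1 / sqrt (1 + 2*t))^(n+2)) \<partial>lborel)"
  proof (intro nn_integral_cong)
    fix t :: real
    show "(\<integral>\<^sup>+x. F x t \<partial>std_gauss n) = ennreal (real n / sqrt pi) * ennreal (indicator {0<..} t * t powr (1/2 - 1) * (1 / sqrt (1 + 2*t))^(n+2))"
    proof (cases "t > 0")
      case True
      define K where "K = t powr (1/2 - 1) / sqrt pi"
      have K0: "K \<ge> 0" by (simp add: K_def)
      have "(\<integral>\<^sup>+x. F x t \<partial>std_gauss n) = (\<integral>\<^sup>+x. ennreal K * ennreal ((\<Sum>j<n. (x j)^2) * exp (- (t * (\<Sum>j<n. (x j)^2)))) \<partial>std_gauss n)"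
      proof (intro nn_integral_cong)
        fix x :: "nat \<Rightarrow> real"
        have eq: "indicator {0<..} t * t powr (1/2 - 1) / sqrt pi * ((\<Sum>j<n. (x j)^2) * exp (- (t * (\<Sum>j<n. (x j)^2))))
            = K * ((\<Sum>j<n. (x j)^2) * exp (- (t * (\<Sum>j<n. (x j)^2))))"
          using True by (simp add: K_def)
        show "F x t = ennreal K * ennreal ((\<Sum>j<n. (x j)^2) * exp (- (t * (\<Sum>j<n. (x j)^2))))"
          unfolding F_def eq by (rule ennreal_mult'[OF K0])
      qed
      also have "\<dots> = ennreal K * ennreal (real n * (1 / sqrt (1 + 2*t))^(n+2))"
        using True by (subst nn_integral_cmult) (auto simp: std_gauss_NN[symmetric] gauss_prod simp del: std_gauss_NN, unfold std_gauss_NN, measurable)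
      also have "\<dots> = ennreal (real n / sqrt pi) * ennreal (indicator {0<..} t * t powr (1/2 - 1) * (1 / sqrt (1 + 2*t))^(n+2))"
        using True K0 by (simp add: K_def ennreal_mult'[symmetric] mult_ac)
      finally show ?thesis .
    next
      case False
      thus ?thesis by (simp add: F_def)
    qed
  qed
  also have "\<dots> = ennreal (real n / sqrt pi) * (\<integral>\<^sup>+t. ennreal (indicator {0<..} t * t powr (1/2 - 1) * (1 / sqrt (1 + 2*t))^(n+2)) \<partial>lborel)"
    by (rule nn_integral_cmult) measurable
  also have "(\<integral>\<^sup>+t. ennreal (indicator {0<..} t * t powr (1/2 - 1) * (1 / sqrt (1 + 2*t))^(n+2)) \<partial>lborel)
      = ennreal (Gamma (1/2) / (sqrt 2 * Gamma c) * Gamma (c - 1/2))"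
    by (rule J_integral[of n, folded c_def])
  also have "ennreal (real n / sqrt pi) * ennreal (Gamma (1/2) / (sqrt 2 * Gamma c) * Gamma (c - 1/2)) = ennreal (real n / sqrt pi * (Gamma (1/2) / (sqrt 2 * Gamma c) * Gamma (c - 1/2)))"
    by (rule ennreal_mult'[symmetric]) simp
  also have "real n / sqrt pi * (Gamma (1/2) / (sqrt 2 * Gamma c) * Gamma (c - 1/2)) = sqrt 2 * Gamma ((real n + 1) / 2) / Gamma (real n / 2)"
  proof -
    have g: "Gamma c = (real n / 2) * Gamma (real n / 2)"
      unfolding c_def using n by (subst Gamma_plus1) (auto simp: nonpos_Ints_def)
    have g2: "Gamma (real n / 2) > 0" using n by simp
    have e: "c - 1/2 = (real n + 1) / 2" by (simp add: c_def field_simps)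
    have s2: "sqrt 2 * sqrt 2 = (2::real)" by simp
    have g3: "Gamma (real n / 2) \<noteq> 0" using g2 by simp
    have "2 / sqrt 2 = sqrt (2::real)" by (rule real_div_sqrt) simp
    show ?thesis unfolding g e using n g2 g3 s2
      by (simp add: Gamma_one_half_real field_simps)
  qed
  finally show ?thesis .
qed



lemma gauss_formula:
  fixes n :: nat assumes n: "n \<ge> 1"
  shows "gauss_norm_var n = real n - 2 * (Gamma ((real n + 1) / 2) / Gamma (real n / 2))^2"
proof -
  have PG: "prob_space (std_gauss n)" unfolding std_gauss_NN by (intro prob_space_PiM prob_NN)
  define S where "S = (\<lambda>x::nat\<Rightarrow>real. \<Sum>j<n. (x j)^2)"
  have mS: "S \<in> borel_measurable (std_gauss n)" unfolding S_def std_gauss_NN by measurable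
  have S0: "\<And>x. S x \<ge> 0" unfolding S_def by (auto intro!: sum_nonneg)
  have vn: "vnorm n = (\<lambda>x. sqrt (S x))" by (simp add: vnorm_def S_def fun_eq_iff)
  have nnS: "(\<integral>\<^sup>+x. ennreal (S x) \<partial>std_gauss n) = ennreal (real n)"
    using gauss_prod[of 0 n] by (simp add: S_def)
  have hS: "has_bochner_integral (std_gauss n) S (real n)"
    by (rule has_bochner_integral_nn_integral[OF mS _ _ nnS]) (auto simp: S0)
  define m where "m = sqrt 2 * Gamma ((real n + 1) / 2) / Gamma (real n / 2)"
  have m0: "m \<ge> 0" unfolding m_def using n by (simp add: Gamma_real_pos less_imp_le)
  have msq: "(\<lambda>x. sqrt (S x)) \<in> borel_measurable (std_gauss n)" using mS by measurable
  have hm: "has_bochner_integral (std_gauss n) (\<lambda>x. sqrt (S x)) m"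
    by (rule has_bochner_integral_nn_integral[OF msq _ m0])
       (auto simp: S_def m_def gauss_sqrt_mean[OF n] intro!: sum_nonneg)
  have sq: "(\<lambda>x. (sqrt (S x))^2) = S" using S0 by (simp add: fun_eq_iff)
  have "gauss_norm_var n = rvar (std_gauss n) (\<lambda>x. sqrt (S x))"
    by (simp add: gauss_norm_var_def vn)
  also have "\<dots> = (\<integral>x. (sqrt (S x))^2 \<partial>std_gauss n) - (\<integral>x. sqrt (S x) \<partial>std_gauss n)^2"
    by (rule rvar_expand[OF PG msq]) (use hS sq in \<open>simp add: has_bochner_integral_iff\<close>)
  also have "\<dots> = real n - m^2"
    using hS hm sq by (simp add: has_bochner_integral_iff)
  also have "m^2 = 2 * (Gamma ((real n + 1) / 2) / Gamma (real n / 2))^2"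
    unfolding m_def by (simp add: power_mult_distrib power_divide)
  finally show ?thesis .
qed

lemma gnv_dd: "n \<ge> 1 \<Longrightarrow> gauss_norm_var n = 1/2 - 2 * dd n"
  using gauss_formula[of n] by (simp add: dd_def ga_def)

theorem theorem7:
  shows "(\<forall>(M :: 'a measure) (X :: 'a \<Rightarrow> nat \<Rightarrow> real) (n :: nat).
            prob_space M \<and>
            (\<forall>i<n. (\<lambda>\<omega>. X \<omega> i) \<in> borel_measurable M \<and> integrable M (\<lambda>\<omega>. (X \<omega> i)\<^sup>2))
            \<longrightarrow> vvar M n (\<lambda>\<omega>. sort_vec n (X \<omega>)) \<ge> rvar M (\<lambda>\<omega>. vnorm n (X \<omega>)))
       \<and> (\<forall>n\<ge>1. gauss_norm_var n
                 = real n - 2 * (Gamma ((real n + 1) / 2) / Gamma (real n / 2))\<^sup>2)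
       \<and> (\<forall>n\<ge>1. gauss_norm_var n \<le> gauss_norm_var (Suc n))
       \<and> gauss_norm_var \<longlonglongrightarrow> 1 / 2"
proof (intro conjI allI impI)
  fix M :: "'a measure" and X :: "'a \<Rightarrow> nat \<Rightarrow> real" and n :: nat
  assume "prob_space M \<and> (\<forall>i<n. (\<lambda>\<omega>. X \<omega> i) \<in> borel_measurable M \<and> integrable M (\<lambda>\<omega>. (X \<omega> i)\<^sup>2))"
  thus "vvar M n (\<lambda>\<omega>. sort_vec n (X \<omega>)) \<ge> rvar M (\<lambda>\<omega>. vnorm n (X \<omega>))"
    using part1 by blast
next
  fix n :: nat assume "n \<ge> 1"
  thus "gauss_norm_var n = real n - 2 * (Gamma ((real n + 1) / 2) / Gamma (real n / 2))\<^sup>2"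
    by (rule gauss_formula)
next
  fix n :: nat assume n: "n \<ge> 1"
  show "gauss_norm_var n \<le> gauss_norm_var (Suc n)"
    using gnv_dd[OF n] gnv_dd[of "Suc n"] dd_mono[OF n] by simp
next
  have "(\<lambda>n. 1/2 - 2 * dd n) \<longlonglongrightarrow> 1/2 - 2 * 0"
    by (intro tendsto_intros dd_lim)
  hence "(\<lambda>n. 1/2 - 2 * dd n) \<longlonglongrightarrow> 1/2" by simp
  moreover have "\<forall>\<^sub>F n in sequentially. 1/2 - 2 * dd n = gauss_norm_var n"
    using eventually_ge_at_top[of "1::nat"] by eventually_elim (simp add: gnv_dd)
  ultimately show "gauss_norm_var \<longlonglongrightarrow> 1 / 2"
    by (rule Lim_transform_eventually)
qed

end
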